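(* Let $(\omega,\rho)$ be a half-flat ${\rm SU}(3)$-structure on the Lie algebra $\mathfrak g=\mathfrak h_3\oplus\mathfrak h_3$ (i.e. a compatible normalised pair of stable forms on $\mathfrak g$ with positive definite induced metric, $d\rho=0$ and $d(\omega^2)=0$). Then $\omega(\mathfrak z,\mathfrak z)\neq0$, where $\mathfrak z$ is the centre of $\mathfrak g$. In particular there is a standard basis in which $\omega$ is a nonzero multiple of $e^1\wedge f^1+e^2\wedge f^2+e^3\wedge f^3$.
   Context: A standard basis of $\mathfrak h_3\oplus\mathfrak h_3$ ($\mathfrak h_3$ the three-dimensional Heisenberg algebra) is a basis $e_1,e_2,e_3,f_1,f_2,f_3$ with dual basis $e^1,\dots,f^3$ such that $de^3=e^1\wedge e^2$, $df^3=f^1\wedge f^2$, all other basis one-forms closed; the centre is $\mathrm{span}\{e_3,f_3\}$. For a stable three-form $\rho$ on an oriented six-dimensional space: $K_\rho(v)=\kappa((v\lrcorner\rho)\wedge\rho)$, $\lambda(\rho)=\frac16\mathrm{tr}K_\rho^2$, $J_\rho=K_\rho/\sqrt{|\lambda(\rho)|}$. A compatible normalised pair $(\omega,\rho)$: $\omega$ nondegenerate, $\rho$ stable, $\omega\wedge\rho=0$, $J_\rho^*\rho\wedge\rho=\frac23\omega^3$ (orientation by $\omega^3$); its induced metric is $\varepsilon\omega(\cdot,J_\rho\cdot)$, $\varepsilon=\mathrm{sign}\lambda(\rho)$; it is an ${\rm SU}(3)$-structure iff this metric is positive definite. *)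

theory Defs
  imports Complex_Main "HOL-Combinatorics.Permutations"
begin

text \<open>Vectors are functions nat => real supported on indices 0..5; the standard
  basis e1,e2,e3,f1,f2,f3 corresponds to the indices 0,1,2,3,4,5.
  A k-form is represented by its components alpha [i1,...,ik] =
  alpha(b_i1,...,b_ik) with respect to the standard basis (functions on index lists).\<close>

type_synonym vec = "nat \<Rightarrow> real"
type_synonym form = "nat list \<Rightarrow> real"

definition V :: "vec set" where
  "V = {v. \<forall>i\<ge>6. v i = 0}"

definition unitv :: "nat \<Rightarrow> vec" where
  "unitv i = (\<lambda>m. if m = i then 1 else 0)"

definition idx :: "nat \<Rightarrow> nat list set" where
  "idx k = {ys. length ys = k \<and> set ys \<subseteq> {..<6}}"

definition is_form :: "nat \<Rightarrow> form \<Rightarrow> bool" where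
  "is_form k \<alpha> \<longleftrightarrow>
     (\<forall>xs. xs \<notin> idx k \<longrightarrow> \<alpha> xs = 0) \<and>
     (\<forall>xs \<sigma>. \<sigma> permutes {..<length xs} \<longrightarrow> \<alpha> (permute_list \<sigma> xs) = of_int (sign \<sigma>) * \<alpha> xs) \<and>
     (\<forall>xs. \<not> distinct xs \<longrightarrow> \<alpha> xs = 0)"

text \<open>Wedge product (determinant convention: (e^1 /\ e^2)(e_1,e_2) = 1).\<close>
definition wedge :: "nat \<Rightarrow> nat \<Rightarrow> form \<Rightarrow> form \<Rightarrow> form" where
  "wedge k l \<alpha> \<beta> xs =
     (if xs \<in> idx (k + l) then
        (\<Sum>\<sigma> | \<sigma> permutes {..<k + l}.
            of_int (sign \<sigma>) * \<alpha> (take k (permute_list \<sigma> xs)) * \<beta> (drop k (permute_list \<sigma> xs)))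
        / (fact k * fact l)
      else 0)"

definition intp :: "vec \<Rightarrow> form \<Rightarrow> form" where
  "intp v \<alpha> xs = (\<Sum>i<6. v i * \<alpha> (i # xs))"

definition ev2 :: "form \<Rightarrow> vec \<Rightarrow> vec \<Rightarrow> real" where
  "ev2 \<omega> x y = (\<Sum>i<6. \<Sum>j<6. \<omega> [i, j] * x i * y j)"

definition pull :: "nat \<Rightarrow> (vec \<Rightarrow> vec) \<Rightarrow> form \<Rightarrow> form" where
  "pull k f \<alpha> xs =
     (if xs \<in> idx k then (\<Sum>ys\<in>idx k. \<alpha> ys * (\<Prod>j<k. f (unitv (xs ! j)) (ys ! j))) else 0)"

text \<open>Linear map given by a matrix a (A e_x = sum_y a y x e_y).\<close>
definition matmap :: "(nat \<Rightarrow> nat \<Rightarrow> real) \<Rightarrow> vec \<Rightarrow> vec" where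
  "matmap a v = (\<lambda>y. if y < 6 then (\<Sum>x<6. a y x * v x) else 0)"

definition invertible6 :: "(nat \<Rightarrow> nat \<Rightarrow> real) \<Rightarrow> bool" where
  "invertible6 a \<longleftrightarrow> (\<exists>b. \<forall>i<6. \<forall>j<6. (\<Sum>k<6. a i k * b k j) = (if i = j then 1 else 0))"

text \<open>Stable three-form: its GL(6,R)-orbit is open in the space of three-forms.\<close>
definition stable3 :: "form \<Rightarrow> bool" where
  "stable3 \<rho> \<longleftrightarrow> is_form 3 \<rho> \<and>
     (\<exists>\<epsilon>>0. \<forall>\<sigma>. is_form 3 \<sigma> \<and> (\<forall>xs. \<bar>\<sigma> xs - \<rho> xs\<bar> < \<epsilon>) \<longrightarrow>
        (\<exists>a. invertible6 a \<and> \<sigma> = pull 3 (matmap a) \<rho>))"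

definition nondeg2 :: "form \<Rightarrow> bool" where
  "nondeg2 \<omega> \<longleftrightarrow> is_form 2 \<omega> \<and> (\<forall>x\<in>V. (\<forall>y\<in>V. ev2 \<omega> x y = 0) \<longrightarrow> x = (\<lambda>_. 0))"

text \<open>Lie bracket of h3 + h3 in the standard basis, chosen so that for the
  Chevalley-Eilenberg differential below de^3 = e^1 /\ e^2, df^3 = f^1 /\ f^2.\<close>
definition lb :: "vec \<Rightarrow> vec \<Rightarrow> vec" where
  "lb x y = (\<lambda>m. if m = 2 then - (x 0 * y 1 - x 1 * y 0)
                 else if m = 5 then - (x 3 * y 4 - x 4 * y 3) else 0)"

definition centre :: "vec set" where
  "centre = {x \<in> V. \<forall>y\<in>V. lb x y = (\<lambda>_. 0)}"

definition dform :: "nat \<Rightarrow> form \<Rightarrow> form" where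
  "dform k \<alpha> xs =
     (if xs \<in> idx (k + 1) then
        (\<Sum>i<k + 1. \<Sum>j\<in>{i<..<k + 1}. (-1) ^ (i + j) *
           intp (lb (unitv (xs ! i)) (unitv (xs ! j))) \<alpha>
             (map (nth xs) (filter (\<lambda>m. m \<noteq> i \<and> m \<noteq> j) [0..<k + 1])))
      else 0)"

text \<open>kappa: Lambda^5 -> V (x) Lambda^6, trivialised by the volume form nu:
  kappa(eta) = v where v _| nu = eta.\<close>
definition kappa :: "form \<Rightarrow> form \<Rightarrow> vec" where
  "kappa \<nu> \<eta> = (THE v. v \<in> V \<and> intp v \<nu> = \<eta>)"

text \<open>Volume form omega^3 (orientation given by omega^3).\<close>
definition cube :: "form \<Rightarrow> form" where
  "cube \<omega> = wedge 2 4 \<omega> (wedge 2 2 \<omega> \<omega>)"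

definition Kmap :: "form \<Rightarrow> form \<Rightarrow> vec \<Rightarrow> vec" where
  "Kmap \<omega> \<rho> v = kappa (cube \<omega>) (wedge 2 3 (intp v \<rho>) \<rho>)"

definition lam :: "form \<Rightarrow> form \<Rightarrow> real" where
  "lam \<omega> \<rho> = (\<Sum>i<6. Kmap \<omega> \<rho> (Kmap \<omega> \<rho> (unitv i)) i) / 6"

definition Jmap :: "form \<Rightarrow> form \<Rightarrow> vec \<Rightarrow> vec" where
  "Jmap \<omega> \<rho> v = (\<lambda>m. Kmap \<omega> \<rho> v m / sqrt \<bar>lam \<omega> \<rho>\<bar>)"

definition metric :: "form \<Rightarrow> form \<Rightarrow> vec \<Rightarrow> vec \<Rightarrow> real" where
  "metric \<omega> \<rho> x y = sgn (lam \<omega> \<rho>) * ev2 \<omega> x (Jmap \<omega> \<rho> y)"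

definition compatible_normalised :: "form \<Rightarrow> form \<Rightarrow> bool" where
  "compatible_normalised \<omega> \<rho> \<longleftrightarrow>
     nondeg2 \<omega> \<and> stable3 \<rho> \<and>
     wedge 2 3 \<omega> \<rho> = (\<lambda>_. 0) \<and>
     wedge 3 3 (pull 3 (Jmap \<omega> \<rho>) \<rho>) \<rho> = (\<lambda>xs. 2/3 * cube \<omega> xs)"

definition SU3_structure :: "form \<Rightarrow> form \<Rightarrow> bool" where
  "SU3_structure \<omega> \<rho> \<longleftrightarrow> compatible_normalised \<omega> \<rho> \<and>
     (\<forall>x\<in>V. x \<noteq> (\<lambda>_. 0) \<longrightarrow> metric \<omega> \<rho> x x > 0)"

definition half_flat :: "form \<Rightarrow> form \<Rightarrow> bool" where
  "half_flat \<omega> \<rho> \<longleftrightarrow> SU3_structure \<omega> \<rho> \<and>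
     dform 3 \<rho> = (\<lambda>_. 0) \<and> dform 4 (wedge 2 2 \<omega> \<omega>) = (\<lambda>_. 0)"

definition comb :: "(nat \<Rightarrow> vec) \<Rightarrow> vec \<Rightarrow> vec" where
  "comb b c = (\<lambda>m. \<Sum>k<6. c k * b k m)"

text \<open>A standard basis: a basis b 0..b 5 of V with the same bracket relations
  as the standard basis (equivalently, its dual basis satisfies the structure equations).\<close>
definition standard_basis :: "(nat \<Rightarrow> vec) \<Rightarrow> bool" where
  "standard_basis b \<longleftrightarrow>
     (\<forall>i<6. b i \<in> V) \<and>
     (\<forall>c. comb b c = (\<lambda>_. 0) \<longrightarrow> (\<forall>k<6. c k = 0)) \<and>
     (\<forall>i<6. \<forall>j<6. lb (b i) (b j) = comb b (lb (unitv i) (unitv j)))"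

definition stdform :: "nat \<Rightarrow> nat \<Rightarrow> real" where
  "stdform i j = (if i < 3 \<and> j = i + 3 then 1 else if j < 3 \<and> i = j + 3 then -1 else 0)"

end

theory Submission
  imports Defs
begin

lemma alt_sum:
  fixes f :: "nat list \<Rightarrow> real"
  assumes tau: "\<tau> permutes {..<length xs}"
  shows "(\<Sum>\<sigma> | \<sigma> permutes {..<length xs}. of_int (sign \<sigma>) * f (permute_list \<sigma> (permute_list \<tau> xs)))
       = of_int (sign \<tau>) * (\<Sum>\<sigma> | \<sigma> permutes {..<length xs}. of_int (sign \<sigma>) * f (permute_list \<sigma> xs))"
proof -
  let ?P = "{\<sigma>. \<sigma> permutes {..<length xs}}"
  have pt: "permutation \<tau>" using tau by (auto simp: permutation_permutes)
  have "(\<Sum>\<sigma>\<in>?P. of_int (sign \<sigma>) * f (permute_list \<sigma> xs))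
      = (\<Sum>\<sigma>\<in>?P. of_int (sign (\<tau> \<circ> \<sigma>)) * f (permute_list (\<tau> \<circ> \<sigma>) xs))"
    by (rule setum_permutations_compose_left[OF tau])
  also have "\<dots> = (\<Sum>\<sigma>\<in>?P. of_int (sign \<tau>) * (of_int (sign \<sigma>) * f (permute_list \<sigma> (permute_list \<tau> xs))))"
    apply (rule sum.cong, simp)
    apply (subst permute_list_compose, simp)
    apply (subst sign_compose[OF pt])
    by (auto simp: permutation_permutes)
  finally have "(\<Sum>\<sigma>\<in>?P. of_int (sign \<sigma>) * f (permute_list \<sigma> xs))
     = of_int (sign \<tau>) * (\<Sum>\<sigma>\<in>?P. of_int (sign \<sigma>) * f (permute_list \<sigma> (permute_list \<tau> xs)))"
    by (simp add: sum_distrib_left)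
  then show ?thesis
    by (metis (no_types, lifting) mult.assoc mult_1 of_int_1 of_int_mult sign_idempotent)
qed


lemma alt_nondistinct:
  fixes \<alpha> :: form
  assumes alt: "\<forall>xs \<sigma>. \<sigma> permutes {..<length xs} \<longrightarrow> \<alpha> (permute_list \<sigma> xs) = of_int (sign \<sigma>) * \<alpha> xs"
    and nd: "\<not> distinct xs"
  shows "\<alpha> xs = 0"
proof -
  obtain i j where ij: "i < length xs" "j < length xs" "i \<noteq> j" "xs ! i = xs ! j"
    using nd by (auto simp: distinct_conv_nth)
  let ?t = "Transposition.transpose i j"
  have tp: "?t permutes {..<length xs}" using ij by (intro permutes_swap_id) auto
  have "permute_list ?t xs = xs"
    apply (rule nth_equalityI, simp)
    apply (subst permute_list_nth[OF tp], simp)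
    using ij by (auto simp: Transposition.transpose_def)
  then have "\<alpha> xs = of_int (sign ?t) * \<alpha> xs" using alt tp by metis
  then show ?thesis using ij by (simp add: sign_swap_id)
qed

lemma idx_permute: "\<sigma> permutes {..<length xs} \<Longrightarrow> permute_list \<sigma> xs \<in> idx k \<longleftrightarrow> xs \<in> idx k"
  by (simp add: idx_def)

lemma wedge_alt:
  "\<forall>xs \<sigma>. \<sigma> permutes {..<length xs} \<longrightarrow> wedge k l \<alpha> \<beta> (permute_list \<sigma> xs) = of_int (sign \<sigma>) * wedge k l \<alpha> \<beta> xs"
proof (intro allI impI)
  fix xs :: "nat list" and \<sigma> assume s: "\<sigma> permutes {..<length xs}"
  show "wedge k l \<alpha> \<beta> (permute_list \<sigma> xs) = of_int (sign \<sigma>) * wedge k l \<alpha> \<beta> xs"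
  proof (cases "xs \<in> idx (k + l)")
    case True
    then have len: "length xs = k + l" by (simp add: idx_def)
    have "(\<Sum>\<tau> | \<tau> permutes {..<k + l}. of_int (sign \<tau>) * (\<alpha> (take k (permute_list \<tau> (permute_list \<sigma> xs))) * \<beta> (drop k (permute_list \<tau> (permute_list \<sigma> xs)))))
      = of_int (sign \<sigma>) * (\<Sum>\<tau> | \<tau> permutes {..<k + l}. of_int (sign \<tau>) * (\<alpha> (take k (permute_list \<tau> xs)) * \<beta> (drop k (permute_list \<tau> xs))))"
      using alt_sum[OF s, where f = "\<lambda>ys. \<alpha> (take k ys) * \<beta> (drop k ys)"] len by simp
    then show ?thesis using True s
      by (simp add: wedge_def idx_permute mult.assoc)
  next
    case False
    then show ?thesis using s by (simp add: wedge_def idx_permute)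
  qed
qed

lemma wedge_form: "is_form (k + l) (wedge k l \<alpha> \<beta>)"
  unfolding is_form_def
  using wedge_alt[of k l \<alpha> \<beta>] alt_nondistinct[OF wedge_alt[of k l \<alpha> \<beta>]]
  by (auto simp: wedge_def)


lemma form_mset:
  assumes f: "is_form k \<alpha>" and m: "mset xs = mset ys"
  shows "\<exists>s. (s = 1 \<or> s = -1) \<and> \<alpha> xs = s * \<alpha> ys"
proof -
  obtain p where p: "p permutes {..<length ys}" "permute_list p ys = xs"
    using mset_eq_permutation[OF m] by blast
  then have "\<alpha> xs = of_int (sign p) * \<alpha> ys" using f unfolding is_form_def by metis
  then show ?thesis by (auto simp: sign_def)
qed

lemma forms_eq_sorted:
  assumes fa: "is_form k \<alpha>" and fb: "is_form k \<beta>"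
    and agree: "\<And>xs. xs \<in> idx k \<Longrightarrow> sorted xs \<Longrightarrow> distinct xs \<Longrightarrow> \<alpha> xs = \<beta> xs"
  shows "\<alpha> = \<beta>"
proof
  fix xs
  show "\<alpha> xs = \<beta> xs"
  proof (cases "xs \<in> idx k \<and> distinct xs")
    case False
    then show ?thesis using fa fb unfolding is_form_def by metis
  next
    case True
    let ?ys = "sort xs"
    have m: "mset xs = mset ?ys" by simp
    obtain p where p: "p permutes {..<length ?ys}" "permute_list p ?ys = xs"
      using mset_eq_permutation[OF m] by blast
    have ys: "?ys \<in> idx k" "sorted ?ys" "distinct ?ys" using True by (auto simp: idx_def)
    have "\<alpha> xs = of_int (sign p) * \<alpha> ?ys" using fa p unfolding is_form_def by metis
    moreover have "\<beta> xs = of_int (sign p) * \<beta> ?ys" using fb p unfolding is_form_def by metis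
    ultimately show ?thesis using agree[OF ys] by simp
  qed
qed

definition lift :: "(nat \<Rightarrow> nat) \<Rightarrow> nat \<Rightarrow> nat" where
  "lift \<sigma> = (\<lambda>j. if j = 0 then 0 else Suc (\<sigma> (j - 1)))"

lemma lift_permutes:
  assumes "\<sigma> permutes {..<n}" shows "lift \<sigma> permutes {..<Suc n}"
proof -
  have b: "bij \<sigma>" using assms permutes_bij by blast
  have fix': "\<And>x. x \<ge> n \<Longrightarrow> \<sigma> x = x" using assms unfolding permutes_def by auto
  show ?thesis unfolding permutes_def
  proof (intro conjI allI)
    fix x show "x \<notin> {..<Suc n} \<longrightarrow> lift \<sigma> x = x" using fix' by (auto simp: lift_def)
  next
    fix y show "\<exists>!x. lift \<sigma> x = y"
    proof (cases y)
      case 0 then show ?thesis by (auto simp: lift_def intro!: exI[of _ 0] split: if_splits)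
    next
      case (Suc z)
      obtain w where w: "\<sigma> w = z" using b by (metis bij_pointE)
      have u: "\<And>w'. \<sigma> w' = z \<Longrightarrow> w' = w" using b w by (metis bij_pointE)
      show ?thesis
        apply (rule ex1I[of _ "Suc w"])
        using w Suc apply (simp add: lift_def)
        using u Suc by (auto simp: lift_def split: if_splits)
    qed
  qed
qed

lemma lift_id: "lift id = id"
  by (auto simp: lift_def fun_eq_iff)

lemma lift_comp_transpose: "lift (Transposition.transpose a b \<circ> p) = Transposition.transpose (Suc a) (Suc b) \<circ> lift p"
  by (auto simp: lift_def fun_eq_iff Transposition.transpose_def)

lemma sign_lift:
  assumes "\<sigma> permutes {..<n}" shows "sign (lift \<sigma>) = sign \<sigma>"
  using assms finite_lessThan
proof (induction rule: permutes_induct)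
  case id then show ?case using lift_id by (simp add: id_def)
next
  case (swap a b p)
  have pS: "p permutes {..<n}" using swap by simp
  have pp: "permutation p" using pS by (auto simp: permutation_permutes)
  have lp: "permutation (lift p)" using lift_permutes[OF pS] by (auto simp: permutation_permutes)
  have "sign (lift (Transposition.transpose a b \<circ> p)) = sign (Transposition.transpose (Suc a) (Suc b) \<circ> lift p)"
    by (simp only: lift_comp_transpose)
  also have "\<dots> = sign (Transposition.transpose (Suc a) (Suc b)) * sign (lift p)"
    by (rule sign_compose[OF permutation_swap_id lp])
  also have "\<dots> = sign (Transposition.transpose a b) * sign p"
    using swap by (simp add: sign_swap_id)
  also have "\<dots> = sign (Transposition.transpose a b \<circ> p)"
    by (rule sign_compose[OF permutation_swap_id pp, symmetric])
  finally show ?case .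
qed

lemma permute_list_lift:
  assumes "\<sigma> permutes {..<length xs}"
  shows "permute_list (lift \<sigma>) (i # xs) = i # permute_list \<sigma> xs"
proof (rule nth_equalityI)
  show "length (permute_list (lift \<sigma>) (i # xs)) = length (i # permute_list \<sigma> xs)" by simp
next
  fix j assume j: "j < length (permute_list (lift \<sigma>) (i # xs))"
  have lp: "lift \<sigma> permutes {..<length (i # xs)}" using lift_permutes[OF assms] by simp
  show "permute_list (lift \<sigma>) (i # xs) ! j = (i # permute_list \<sigma> xs) ! j"
    using j
    apply (subst permute_list_nth[OF lp], simp)
    apply (cases j)
     apply (simp add: lift_def)
    apply (simp add: lift_def permute_list_nth[OF assms])
    done
qed

lemma intp_form:
  assumes f: "is_form (Suc k) \<nu>"
  shows "is_form k (intp v \<nu>)"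
  unfolding is_form_def
proof (intro conjI allI impI)
  fix xs :: "nat list" assume "xs \<notin> idx k"
  then have "\<And>i. i < 6 \<Longrightarrow> i # xs \<notin> idx (Suc k)" by (auto simp: idx_def)
  then show "intp v \<nu> xs = 0" using f unfolding is_form_def intp_def by simp
next
  fix xs :: "nat list" assume "\<not> distinct xs"
  then show "intp v \<nu> xs = 0" using f unfolding is_form_def intp_def by simp
next
  fix xs :: "nat list" and \<sigma> assume s: "\<sigma> permutes {..<length xs}"
  have ls: "lift \<sigma> permutes {..<length (i # xs)}" for i using lift_permutes[OF s] by simp
  have "\<nu> (i # permute_list \<sigma> xs) = of_int (sign \<sigma>) * \<nu> (i # xs)" for i
    using f ls[of i] unfolding is_form_def
    by (metis permute_list_lift[OF s] sign_lift[OF s])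
  then show "intp v \<nu> (permute_list \<sigma> xs) = of_int (sign \<sigma>) * intp v \<nu> xs"
    by (simp add: intp_def sum_distrib_left algebra_simps)
qed


definition LL :: "nat \<Rightarrow> nat list" where
  "LL m = filter (\<lambda>i. i \<noteq> m) [0..<6]"

lemma LL_cases: "(m::nat) < 6 \<Longrightarrow> (m = 0 \<or> m = 1 \<or> m = 2 \<or> m = 3 \<or> m = 4 \<or> m = 5)"
  by auto

lemma sorted5:
  assumes "xs \<in> idx 5" "sorted xs" "distinct xs"
  shows "\<exists>m<6. xs = LL m"
proof -
  have sub: "set xs \<subseteq> {..<6}" and c: "card (set xs) = 5"
    using assms by (auto simp: idx_def distinct_card)
  have "\<not> {..<6} \<subseteq> set xs"
  proof
    assume "{..<6} \<subseteq> set xs"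
    then have "card {..<6::nat} \<le> card (set xs)" by (intro card_mono) auto
    then show False using c by simp
  qed
  then obtain m where m: "m < 6" "m \<notin> set xs" by auto
  have "set xs \<subseteq> {..<6} - {m}" using sub m by auto
  moreover have "card ({..<6::nat} - {m}) = 5" using m by simp
  ultimately have "set xs = {..<6} - {m}"
    using c by (intro card_subset_eq) auto
  also have "\<dots> = set (LL m)" by (auto simp: LL_def)
  finally have se: "set xs = set (LL m)" .
  have s1: "sorted (LL m)" unfolding LL_def by (rule sorted_wrt_filter) simp
  have d1: "distinct (LL m)" by (simp add: LL_def)
  have "xs = LL m" using sorted_distinct_set_unique[OF assms(2,3) s1 d1 se] .
  then show ?thesis using m by blast
qed

lemma sorted6:
  assumes "xs \<in> idx 6" "sorted xs" "distinct xs"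
  shows "xs = [0..<6]"
proof -
  have sub: "set xs \<subseteq> {..<6}" and c: "card (set xs) = 6"
    using assms by (auto simp: idx_def distinct_card)
  have "set xs = {..<6}" using sub c by (intro card_subset_eq) auto
  have "set [0..<6] = {..<(6::nat)}" by auto
  then have se: "set xs = set [0..<6]" using \<open>set xs = {..<6}\<close> by simp
  show ?thesis using sorted_distinct_set_unique[OF assms(2,3) sorted_upt distinct_upt se] .
qed

lemma u6: "[0..<6::nat] = [0,1,2,3,4,5]" by (simp add: upt_rec)

lemma mset_LL: "m < 6 \<Longrightarrow> mset (m # LL m) = mset [0..<6]"
  apply (drule LL_cases)
  apply (elim disjE)
  by (simp_all add: LL_def u6 add_mset_commute)

lemma m_in_LL: "i \<noteq> m \<Longrightarrow> i < 6 \<Longrightarrow> i \<in> set (LL m)"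
  by (auto simp: LL_def)

lemma intp_LL:
  assumes f: "is_form 6 \<nu>" and m: "m < 6"
  shows "intp w \<nu> (LL m) = w m * \<nu> (m # LL m)"
proof -
  have "intp w \<nu> (LL m) = (\<Sum>i<6. if i = m then w m * \<nu> (m # LL m) else 0)"
    unfolding intp_def
    apply (rule sum.cong, simp)
    using f m_in_LL unfolding is_form_def by auto
  then show ?thesis using m by simp
qed

lemma nu_LL:
  assumes f: "is_form 6 \<nu>" and N: "\<nu> [0..<6] \<noteq> 0" and m: "m < 6"
  shows "\<nu> (m # LL m) \<noteq> 0"
  using form_mset[OF f mset_LL[OF m]] N by auto

lemma kappa_char:
  assumes f6: "is_form 6 \<nu>" and N: "\<nu> [0..<6] \<noteq> 0" and f5: "is_form 5 \<eta>"
  shows "kappa \<nu> \<eta> \<in> V \<and> (\<forall>m<6. kappa \<nu> \<eta> m * \<nu> (m # LL m) = \<eta> (LL m))"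
proof -
  define v where "v = (\<lambda>m. if m < 6 then \<eta> (LL m) / \<nu> (m # LL m) else 0)"
  have vV: "v \<in> V" by (simp add: V_def v_def)
  have iv: "intp v \<nu> = \<eta>"
  proof (rule forms_eq_sorted[OF intp_form f5])
    show "is_form (Suc 5) \<nu>" using f6 by simp
    fix xs assume "xs \<in> idx 5" "sorted xs" "distinct xs"
    then obtain m where m: "m < 6" "xs = LL m" using sorted5 by blast
    show "intp v \<nu> xs = \<eta> xs"
      using m intp_LL[OF f6 m(1)] nu_LL[OF f6 N m(1)] by (simp add: v_def)
  qed
  have uniq: "w = v" if "w \<in> V" "intp w \<nu> = \<eta>" for w
  proof
    fix m show "w m = v m"
    proof (cases "m < 6")
      case True
      have "w m * \<nu> (m # LL m) = \<eta> (LL m)" using intp_LL[OF f6 True, of w] that by simp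
      then show ?thesis using True nu_LL[OF f6 N True] by (simp add: v_def field_simps)
    next
      case False then show ?thesis using that by (simp add: V_def v_def)
    qed
  qed
  have kv: "kappa \<nu> \<eta> = v"
    unfolding kappa_def
    apply (rule the_equality)
    using vV iv apply simp
    using uniq by blast
  have all: "\<forall>m<6. v m * \<nu> (m # LL m) = \<eta> (LL m)"
  proof (intro allI impI)
    fix m :: nat assume m: "m < 6"
    show "v m * \<nu> (m # LL m) = \<eta> (LL m)" using intp_LL[OF f6 m, of v] iv by simp
  qed
  show ?thesis unfolding kv using vV all by (rule conjI)
qed

lemma sum4: "(\<Sum>i<4. \<Sum>j\<in>{i<..<4}. F i j) = F 0 1 + F 0 2 + F 0 3 + F 1 2 + F 1 3 + (F 2 3 :: real)" for F :: "nat \<Rightarrow> nat \<Rightarrow> real"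
proof -
  have e: "{..<4::nat} = {0,1,2,3}" "{0<..<4::nat} = {1,2,3}" "{1<..<4::nat} = {2,3}" "{Suc 0<..<4::nat} = {2,3}" "{2<..<4::nat} = {3}" "{3<..<4::nat} = {}" by auto
  show ?thesis by (simp add: e add.assoc)
qed
lemma sum5: "(\<Sum>i<5. \<Sum>j\<in>{i<..<5}. F i j) = F 0 1 + F 0 2 + F 0 3 + F 0 4 + F 1 2 + F 1 3 + F 1 4 + F 2 3 + F 2 4 + (F 3 4 :: real)" for F :: "nat \<Rightarrow> nat \<Rightarrow> real"
proof -
  have e: "{..<5::nat} = {0,1,2,3,4}" "{0<..<5::nat} = {1,2,3,4}" "{1<..<5::nat} = {2,3,4}" "{Suc 0<..<5::nat} = {2,3,4}" "{2<..<5::nat} = {3,4}" "{3<..<5::nat} = {4}" "{4<..<5::nat} = {}" by auto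
  show ?thesis by (simp add: e add.assoc)
qed
lemma sum6: "(\<Sum>i<6. f i) = f 0 + f 1 + f 2 + f 3 + f 4 + (f 5 :: real)"
  for f :: "nat \<Rightarrow> real"
proof -
  have e: "{..<6::nat} = {0,1,2,3,4,5}" by auto
  show ?thesis by (simp add: e add.assoc)
qed
lemma u4: "[0..<4::nat] = [0,1,2,3]" by (simp add: upt_rec)
lemma u5: "[0..<5::nat] = [0,1,2,3,4]" by (simp add: upt_rec)
lemma drho_vals:
  assumes "dform 3 \<rho> = (\<lambda>_. 0)"
  shows "\<rho> [2,5,3] = 0" "\<rho> [2,5,4] = 0" "\<rho> [5,2,0] = 0" "\<rho> [5,2,1] = 0"
proof -
  have "dform 3 \<rho> [0,1,5,3] = 0" "dform 3 \<rho> [0,1,5,4] = 0" "dform 3 \<rho> [3,4,2,0] = 0" "dform 3 \<rho> [3,4,2,1] = 0"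
    using assms by simp_all
  then show "\<rho> [2,5,3] = 0" "\<rho> [2,5,4] = 0" "\<rho> [5,2,0] = 0" "\<rho> [5,2,1] = 0"
    by (simp_all add: dform_def idx_def intp_def sum6 sum4 lb_def unitv_def u4)
qed

lemma rho25k:
  assumes f: "is_form 3 \<rho>" and d: "dform 3 \<rho> = (\<lambda>_. 0)"
  shows "\<rho> [2,5,k] = 0"
proof -
  have v: "\<rho> [2,5,3] = 0" "\<rho> [2,5,4] = 0" "\<rho> [5,2,0] = 0" "\<rho> [5,2,1] = 0"
    using drho_vals[OF d] by auto
  have m: "mset [5,2,k] = mset [2,5,k]" by simp
  have sw: "\<rho> [5,2,k] = 0 \<Longrightarrow> \<rho> [2,5,k] = 0" for k
    using form_mset[OF f, of "[2,5,k]" "[5,2,k]"] by auto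
  show ?thesis
  proof (cases "k < 6 \<and> k \<noteq> 2 \<and> k \<noteq> 5")
    case True
    then have "k = 0 \<or> k = 1 \<or> k = 3 \<or> k = 4" by auto
    then show ?thesis using v sw by auto
  next
    case False
    then have "[2,5,k] \<notin> idx 3 \<or> \<not> distinct [2,5,k]" by (auto simp: idx_def)
    then show ?thesis using f unfolding is_form_def by blast
  qed
qed

lemma rho25:
  assumes f: "is_form 3 \<rho>" and d: "dform 3 \<rho> = (\<lambda>_. 0)"
    and xs: "2 \<in> set xs" "5 \<in> set xs"
  shows "\<rho> xs = 0"
proof (cases "length xs = 3")
  case False
  then have "xs \<notin> idx 3" by (simp add: idx_def)
  then show ?thesis using f unfolding is_form_def by blast
next
  case True
  then obtain a b c where abc: "xs = [a,b,c]"
    by (metis (no_types, lifting) length_0_conv length_Suc_conv numeral_3_eq_3)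
  have "\<exists>k. mset xs = mset [2,5,k]"
    using xs unfolding abc by (auto simp: add_mset_commute)
  then obtain k where "mset xs = mset [2,5,k]" by blast
  then show ?thesis using form_mset[OF f] rho25k[OF f d, of k] by fastforce
qed


lemma intp_unit: "j < 6 \<Longrightarrow> intp (unitv j) \<alpha> xs = \<alpha> (j # xs)"
proof -
  assume j: "j < 6"
  have "intp (unitv j) \<alpha> xs = (\<Sum>i<6. if i = j then \<alpha> (j # xs) else 0)"
    unfolding intp_def unitv_def by (rule sum.cong) auto
  then show ?thesis using j by simp
qed

lemma eta_zero:
  assumes f: "is_form 3 \<rho>" and d: "dform 3 \<rho> = (\<lambda>_. 0)"
    and m: "m < 6" "m \<noteq> 2" "m \<noteq> 5"
  shows "wedge 2 3 (intp (unitv 2) \<rho>) \<rho> (LL m) = 0"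
proof -
  have z: "of_int (sign \<sigma>) * (intp (unitv 2) \<rho> (take 2 (permute_list \<sigma> (LL m))) * \<rho> (drop 2 (permute_list \<sigma> (LL m)))) = 0"
    if s: "\<sigma> permutes {..<2 + 3}" for \<sigma>
  proof -
    have len: "length (LL m) = 5" using m
      by (auto simp: LL_def u6 dest!: LL_cases)
    have s': "\<sigma> permutes {..<length (LL m)}" using s len by simp
    let ?p = "permute_list \<sigma> (LL m)"
    have sp: "set ?p = set (LL m)" using s' by simp
    have in25: "2 \<in> set ?p" "5 \<in> set ?p" using sp m m_in_LL by auto
    have un: "set ?p = set (take 2 ?p) \<union> set (drop 2 ?p)"
      by (metis append_take_drop_id set_append)
    have "intp (unitv 2) \<rho> (take 2 ?p) * \<rho> (drop 2 ?p) = 0"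
    proof (cases "2 \<in> set (take 2 ?p)")
      case True
      then have "\<not> distinct (2 # take 2 ?p)" by simp
      then have "\<rho> (2 # take 2 ?p) = 0" using f unfolding is_form_def by blast
      then show ?thesis by (simp add: intp_unit)
    next
      case False
      then have t2: "2 \<in> set (drop 2 ?p)" using un in25 by auto
      show ?thesis
      proof (cases "5 \<in> set (drop 2 ?p)")
        case True then show ?thesis using rho25[OF f d t2] by simp
      next
        case False
        then have "5 \<in> set (2 # take 2 ?p)" using un in25 by auto
        then have "\<rho> (2 # take 2 ?p) = 0" using rho25[OF f d] by simp
        then show ?thesis by (simp add: intp_unit)
      qed
    qed
    then show ?thesis by simp
  qed
  show ?thesis unfolding wedge_def
    using z by (simp add: sum.neutral)
qed


lemma zero_form: "is_form k (\<lambda>_. 0)"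
  by (simp add: is_form_def)

lemma ev2_neg: "ev2 \<omega> (\<lambda>m. - x m) y = - ev2 \<omega> x y"
  by (simp add: ev2_def sum_negf)

lemma intp_neg: "intp (\<lambda>m. - x m) \<rho> = (\<lambda>xs. - intp x \<rho> xs)"
  by (simp add: intp_def fun_eq_iff sum_negf)

lemma wedge_neg: "wedge k l (\<lambda>xs. - \<alpha> xs) \<beta> = (\<lambda>xs. - wedge k l \<alpha> \<beta> xs)"
  by (simp add: wedge_def fun_eq_iff sum_negf)

lemma Kmap_neg_zero:
  assumes "cube \<omega> = (\<lambda>_. 0)"
  shows "Kmap \<omega> \<rho> (\<lambda>m. - x m) = Kmap \<omega> \<rho> x"
proof -
  have i0: "intp v (\<lambda>_. 0) = (\<lambda>_. 0)" for v by (simp add: intp_def fun_eq_iff)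
  have e: "((\<lambda>_. 0) = (\<lambda>xs. - \<eta> xs)) = ((\<lambda>_. 0::real) = \<eta>)" for \<eta> :: form
    by (auto simp: fun_eq_iff)
  show ?thesis
    unfolding Kmap_def kappa_def assms i0 intp_neg wedge_neg e ..
qed

lemma unitv_V: "i < 6 \<Longrightarrow> unitv i \<in> V"
  by (simp add: V_def unitv_def)

lemma unitv_nz: "unitv i \<noteq> (\<lambda>_. 0)"
  by (auto simp: unitv_def fun_eq_iff)

lemma cube_nonzero:
  assumes pos: "\<forall>x\<in>V. x \<noteq> (\<lambda>_. 0) \<longrightarrow> metric \<omega> \<rho> x x > 0"
  shows "cube \<omega> [0..<6] \<noteq> 0"
proof
  assume N: "cube \<omega> [0..<6] = 0"
  have f6: "is_form 6 (cube \<omega>)" unfolding cube_def using wedge_form[of 2 4] by simp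
  have c0: "cube \<omega> = (\<lambda>_. 0)"
    by (rule forms_eq_sorted[OF f6 zero_form]) (use N sorted6 in auto)
  let ?x = "unitv 0" let ?y = "\<lambda>m. - unitv 0 m"
  have "?y \<in> V" by (simp add: V_def unitv_def)
  moreover have "?y \<noteq> (\<lambda>_. 0)" by (auto simp: unitv_def fun_eq_iff)
  ultimately have p1: "metric \<omega> \<rho> ?y ?y > 0" using pos by blast
  have p2: "metric \<omega> \<rho> ?x ?x > 0" using pos unitv_V[of 0] unitv_nz[of 0] by auto
  have "Jmap \<omega> \<rho> ?y = Jmap \<omega> \<rho> ?x" unfolding Jmap_def Kmap_neg_zero[OF c0] ..
  then have "metric \<omega> \<rho> ?y ?y = - metric \<omega> \<rho> ?x ?x"
    unfolding metric_def by (simp add: ev2_neg)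
  then show False using p1 p2 by simp
qed

lemma ev2_unit_left:
  assumes "i < 6" shows "ev2 \<omega> (unitv i) y = (\<Sum>j<6. \<omega> [i, j] * y j)"
proof -
  have "ev2 \<omega> (unitv i) y = (\<Sum>k<6. if k = i then (\<Sum>j<6. \<omega> [i, j] * y j) else 0)"
    unfolding ev2_def unitv_def by (rule sum.cong) auto
  then show ?thesis using assms by simp
qed

lemma part1:
  assumes hf: "half_flat \<omega> \<rho>"
  shows "\<omega> [2,5] \<noteq> 0"
proof
  assume w25: "\<omega> [2,5] = 0"
  have fw: "is_form 2 \<omega>" and fr: "is_form 3 \<rho>" and d: "dform 3 \<rho> = (\<lambda>_. 0)"
    and pos: "\<forall>x\<in>V. x \<noteq> (\<lambda>_. 0) \<longrightarrow> metric \<omega> \<rho> x x > 0"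
    using hf by (auto simp: half_flat_def SU3_structure_def compatible_normalised_def nondeg2_def stable3_def)
  have N: "cube \<omega> [0..<6] \<noteq> 0" by (rule cube_nonzero[OF pos])
  have f6: "is_form 6 (cube \<omega>)" unfolding cube_def using wedge_form[of 2 4] by simp
  let ?\<eta> = "wedge 2 3 (intp (unitv 2) \<rho>) \<rho>"
  have f5: "is_form 5 ?\<eta>" using wedge_form[of 2 3] by simp
  let ?K = "Kmap \<omega> \<rho> (unitv 2)"
  have KK: "?K = kappa (cube \<omega>) ?\<eta>" by (simp add: Kmap_def)
  have kc: "?K \<in> V" "\<forall>m<6. ?K m * cube \<omega> (m # LL m) = ?\<eta> (LL m)"
    using kappa_char[OF f6 N f5] KK by auto
  have Kz: "?K m = 0" if "m < 6" "m \<noteq> 2" "m \<noteq> 5" for m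
  proof -
    have "?K m * cube \<omega> (m # LL m) = 0" using kc(2) eta_zero[OF fr d that] that by auto
    then show ?thesis using nu_LL[OF f6 N that(1)] by simp
  qed
  have wz: "\<omega> [2, j] * Jmap \<omega> \<rho> (unitv 2) j = 0" if "j < 6" for j
  proof (cases "j = 2 \<or> j = 5")
    case True
    moreover have "\<omega> [2,2] = 0" using fw unfolding is_form_def by simp
    ultimately show ?thesis using w25 by auto
  next
    case False then show ?thesis using Kz[OF that] by (simp add: Jmap_def)
  qed
  have "ev2 \<omega> (unitv 2) (Jmap \<omega> \<rho> (unitv 2)) = (\<Sum>j<6. \<omega> [2, j] * Jmap \<omega> \<rho> (unitv 2) j)"
    by (rule ev2_unit_left) simp
  also have "\<dots> = 0" using wz by (intro sum.neutral) auto
  finally have "metric \<omega> \<rho> (unitv 2) (unitv 2) = 0" by (simp add: metric_def)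
  moreover have "metric \<omega> \<rho> (unitv 2) (unitv 2) > 0" using pos unitv_V[of 2] unitv_nz[of 2] by auto
  ultimately show False by simp
qed


lemma sum_perm_insert_sign:
  fixes F :: "(nat \<Rightarrow> nat) \<Rightarrow> real"
  assumes "finite S" "a \<notin> S"
  shows "(\<Sum>p | p permutes insert a S. of_int (sign p) * F p)
    = (\<Sum>b\<in>insert a S. \<Sum>q | q permutes S. of_int (sign q) * (of_int (sign (Transposition.transpose a b)) * F (Transposition.transpose a b \<circ> q)))"
  apply (subst sum_over_permutations_insert[OF assms])
  apply (rule sum.cong, simp)
  apply (rule sum.cong, simp)
  apply (subst sign_compose)
    apply (rule permutation_swap_id)
  using assms apply (auto simp: permutation_permutes)
  done

lemmas spi = sum_perm_insert_sign

lemma perm_empty_set: "{p. p permutes ({}::nat set)} = {id}"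
  by auto

lemma skew2:
  assumes "is_form 2 \<omega>" shows "\<omega> [b, a] = - \<omega> [a, b]"
proof -
  let ?t = "Transposition.transpose (0::nat) 1"
  have t: "?t permutes {..<length [a,b]}" by (intro permutes_swap_id) auto
  have "permute_list ?t [a,b] = [b,a]" by (simp add: permute_list_def)
  then show ?thesis using assms t unfolding is_form_def by (metis sign_swap_id of_int_minus of_int_1 mult_minus1 zero_neq_one)
qed

lemma perm3_sum:
  fixes G :: "nat list \<Rightarrow> real"
  shows "(\<Sum>p | p permutes {..<3}. of_int (sign p) * G (permute_list p [x0,x1,x2]))
    = G [x0,x1,x2] - G [x0,x2,x1] - G [x1,x0,x2] + G [x1,x2,x0] + G [x2,x0,x1] - G [x2,x1,x0]"
proof -
  have e: "{..<3::nat} = insert 2 (insert 1 (insert 0 {}))" by auto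
  have n2: "(2::nat) \<notin> insert 1 (insert 0 {})" and n1: "(1::nat) \<notin> insert 0 {}" and n0: "(0::nat) \<notin> {}" by auto
  have fin: "finite (insert 1 (insert 0 ({}::nat set)))" "finite (insert 0 ({}::nat set))" "finite ({}::nat set)" by auto
  show ?thesis
    apply (simp only: e)
    apply (simp only: spi[of "insert 1 (insert 0 {})" 2, OF _ n2] spi[of "insert 0 {}" 1, OF _ n1] spi[of "{}" 0, OF _ n0] fin)
    apply (simp only: perm_empty_set sum.insert finite.emptyI finite_insert insert_iff empty_iff sum.empty)
    apply (simp add: sign_swap_id)
    apply (simp add: permute_list_def upt_rec Transposition.transpose_def)
    done
qed

lemma perm4_sum:
  fixes G :: "nat list \<Rightarrow> real"
  shows "(\<Sum>p | p permutes {..<4}. of_int (sign p) * G (permute_list p [x0,x1,x2,x3]))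
    = G [x0,x1,x2,x3] - G [x0,x1,x3,x2] - G [x0,x2,x1,x3] + G [x0,x2,x3,x1] + G [x0,x3,x1,x2] - G [x0,x3,x2,x1] - G [x1,x0,x2,x3] + G [x1,x0,x3,x2] + G [x1,x2,x0,x3] - G [x1,x2,x3,x0] - G [x1,x3,x0,x2] + G [x1,x3,x2,x0] + G [x2,x0,x1,x3] - G [x2,x0,x3,x1] - G [x2,x1,x0,x3] + G [x2,x1,x3,x0] + G [x2,x3,x0,x1] - G [x2,x3,x1,x0] - G [x3,x0,x1,x2] + G [x3,x0,x2,x1] + G [x3,x1,x0,x2] - G [x3,x1,x2,x0] - G [x3,x2,x0,x1] + G [x3,x2,x1,x0]"
proof -
  have e: "{..<4::nat} = insert 3 (insert 2 (insert 1 (insert 0 {})))" by auto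
  have n3: "(3::nat) \<notin> insert 2 (insert 1 (insert 0 {}))" and n2: "(2::nat) \<notin> insert 1 (insert 0 {})" and n1: "(1::nat) \<notin> insert 0 {}" and n0: "(0::nat) \<notin> {}" by auto
  have fin: "finite (insert 2 (insert 1 (insert 0 ({}::nat set))))" "finite (insert 1 (insert 0 ({}::nat set)))" "finite (insert 0 ({}::nat set))" "finite ({}::nat set)" by auto
  show ?thesis
    apply (simp only: e)
    apply (simp only: spi[of "insert 2 (insert 1 (insert 0 {}))" 3, OF _ n3] spi[of "insert 1 (insert 0 {})" 2, OF _ n2] spi[of "insert 0 {}" 1, OF _ n1] spi[of "{}" 0, OF _ n0] fin)
    apply (simp only: perm_empty_set sum.insert finite.emptyI finite_insert insert_iff empty_iff sum.empty)
    apply (simp add: sign_swap_id)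
    apply (simp add: permute_list_def upt_rec Transposition.transpose_def)
    done
qed

lemma wedge22:
  assumes f: "is_form 2 \<omega>" and abcd: "a < 6" "b < 6" "c < 6" "d < 6"
  shows "wedge 2 2 \<omega> \<omega> [a,b,c,d] = 2 * (\<omega> [a,b] * \<omega> [c,d] - \<omega> [a,c] * \<omega> [b,d] + \<omega> [a,d] * \<omega> [b,c])"
proof -
  have i: "[a,b,c,d] \<in> idx (2+2)" using abcd by (auto simp: idx_def)
  have sk: "\<And>x y. \<omega> [y, x] = - \<omega> [x, y]" using skew2[OF f] by blast
  have e4: "(2::nat) + 2 = 4" by simp
  have "wedge 2 2 \<omega> \<omega> [a,b,c,d] = (\<Sum>p | p permutes {..<4}. of_int (sign p) * (\<lambda>ys. \<omega> (take 2 ys) * \<omega> (drop 2 ys)) (permute_list p [a,b,c,d])) / 4"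
    unfolding wedge_def using i by (simp add: mult.assoc)
  also have "\<dots> = 2 * (\<omega> [a,b] * \<omega> [c,d] - \<omega> [a,c] * \<omega> [b,d] + \<omega> [a,d] * \<omega> [b,c])"
    apply (subst perm4_sum[of "\<lambda>ys. \<omega> (take 2 ys) * \<omega> (drop 2 ys)" a b c d])
    by (simp add: sk[of a b] sk[of a c] sk[of a d] sk[of b c] sk[of b d] sk[of c d] algebra_simps) (simp add: field_simps)
  finally show ?thesis .
qed


lemma intp_lb:
  "intp (lb (unitv i) (unitv j)) F ys =
    (if i = 0 \<and> j = 1 then - F (2 # ys) else if i = 1 \<and> j = 0 then F (2 # ys)
     else if i = 3 \<and> j = 4 then - F (5 # ys) else if i = 4 \<and> j = 3 then F (5 # ys) else 0)"
  by (auto simp: intp_def lb_def unitv_def sum6)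

lemma d4_vals:
  assumes d: "dform 4 F = (\<lambda>_. 0)" and nd: "\<And>xs. \<not> distinct xs \<Longrightarrow> F xs = 0"
  shows "F [2,3,4,5] = 0" "F [5,0,1,2] = 0"
proof -
  have "dform 4 F [0,1,3,4,5] = 0" "dform 4 F [0,1,2,3,4] = 0" using d by simp_all
  then show "F [2,3,4,5] = 0" "F [5,0,1,2] = 0"
    by (simp_all add: dform_def idx_def sum5 u5 intp_lb nd)
qed

lemma C12:
  assumes f: "is_form 2 \<omega>" and d: "dform 4 (wedge 2 2 \<omega> \<omega>) = (\<lambda>_. 0)"
  shows "\<omega> [2,3] * \<omega> [4,5] - \<omega> [2,4] * \<omega> [3,5] + \<omega> [2,5] * \<omega> [3,4] = 0"
    "\<omega> [0,1] * \<omega> [2,5] - \<omega> [0,2] * \<omega> [1,5] + \<omega> [0,5] * \<omega> [1,2] = 0"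
proof -
  have nd: "\<And>xs. \<not> distinct xs \<Longrightarrow> wedge 2 2 \<omega> \<omega> xs = 0"
    using wedge_form[of 2 2 \<omega> \<omega>] unfolding is_form_def by blast
  note v = d4_vals[OF d nd]
  have sk: "\<And>x y. \<omega> [y, x] = - \<omega> [x, y]" using skew2[OF f] by blast
  show "\<omega> [2,3] * \<omega> [4,5] - \<omega> [2,4] * \<omega> [3,5] + \<omega> [2,5] * \<omega> [3,4] = 0"
    using v(1) wedge22[OF f, of 2 3 4 5] by simp
  have w: "wedge 2 2 \<omega> \<omega> [5,0,1,2] = 2 * (\<omega> [5,0] * \<omega> [1,2] - \<omega> [5,1] * \<omega> [0,2] + \<omega> [5,2] * \<omega> [0,1])"
    by (rule wedge22[OF f]) auto
  have s1: "\<omega> [5,0] = - \<omega> [0,5]" "\<omega> [5,1] = - \<omega> [1,5]" "\<omega> [5,2] = - \<omega> [2,5]" by (rule sk)+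
  show "\<omega> [0,1] * \<omega> [2,5] - \<omega> [0,2] * \<omega> [1,5] + \<omega> [0,5] * \<omega> [1,2] = 0"
    using v(2) w unfolding s1 by (simp add: algebra_simps)
qed


definition lc :: "real \<Rightarrow> vec \<Rightarrow> real \<Rightarrow> vec \<Rightarrow> vec" where
  "lc a x b y = (\<lambda>m. a * x m + b * y m)"

lemma ev2_lc_left: "ev2 \<omega> (lc a x b y) z = a * ev2 \<omega> x z + b * ev2 \<omega> y z"
  by (simp add: ev2_def lc_def algebra_simps sum.distrib sum_distrib_left)

lemma ev2_lc_right: "ev2 \<omega> z (lc a x b y) = a * ev2 \<omega> z x + b * ev2 \<omega> z y"
  by (simp add: ev2_def lc_def algebra_simps sum.distrib sum_distrib_left)

lemma ev2_units: assumes "i < 6" "j < 6" shows "ev2 \<omega> (unitv i) (unitv j) = \<omega> [i, j]"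
proof -
  have "ev2 \<omega> (unitv i) (unitv j) = (\<Sum>k<6. if k = j then \<omega> [i, j] else 0)"
    unfolding ev2_unit_left[OF assms(1)] by (rule sum.cong) (auto simp: unitv_def)
  then show ?thesis using assms by simp
qed

definition cc :: "form \<Rightarrow> real" where "cc \<omega> = \<omega> [2,5]"
definition pp :: "form \<Rightarrow> nat \<Rightarrow> real" where "pp \<omega> k = - \<omega> [k,5] / cc \<omega>"
definition qq :: "form \<Rightarrow> nat \<Rightarrow> real" where "qq \<omega> k = \<omega> [k,2] / cc \<omega>"
definition wp :: "form \<Rightarrow> nat \<Rightarrow> vec" where
  "wp \<omega> k = lc 1 (unitv k) 1 (lc (pp \<omega> k) (unitv 2) (qq \<omega> k) (unitv 5))"
definition MM :: "form \<Rightarrow> nat \<Rightarrow> nat \<Rightarrow> real" where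
  "MM \<omega> k l = \<omega> [k,l] + pp \<omega> l * \<omega> [k,2] + qq \<omega> l * \<omega> [k,5]"

lemma diag0: "is_form 2 \<omega> \<Longrightarrow> \<omega> [a, a] = 0"
  unfolding is_form_def by simp

context
  fixes \<omega> :: form
  assumes f: "is_form 2 \<omega>" and c: "\<omega> [2,5] \<noteq> 0"
begin

lemma sk': "\<omega> [y, x] = - \<omega> [x, y]" using skew2[OF f] by blast

lemma wp_u2: "k < 6 \<Longrightarrow> ev2 \<omega> (wp \<omega> k) (unitv 2) = 0"
  using c by (simp add: wp_def ev2_lc_left ev2_units diag0[OF f] sk'[of 2 5] qq_def cc_def)

lemma wp_u5: "k < 6 \<Longrightarrow> ev2 \<omega> (wp \<omega> k) (unitv 5) = 0"
  using c by (simp add: wp_def ev2_lc_left ev2_units diag0[OF f] pp_def cc_def)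

lemma u2_wp: "k < 6 \<Longrightarrow> ev2 \<omega> (unitv 2) (wp \<omega> k) = 0"
  using c by (simp add: wp_def ev2_lc_right ev2_units diag0[OF f] sk'[of k 2] qq_def cc_def)

lemma u5_wp: "k < 6 \<Longrightarrow> ev2 \<omega> (unitv 5) (wp \<omega> k) = 0"
  using c by (simp add: wp_def ev2_lc_right ev2_units diag0[OF f] sk'[of 2 5] sk'[of k 5] pp_def cc_def)

lemma wp_wp: "k < 6 \<Longrightarrow> l < 6 \<Longrightarrow> ev2 \<omega> (wp \<omega> k) (wp \<omega> l) = MM \<omega> k l"
proof -
  assume k: "k < 6" and l: "l < 6"
  have "ev2 \<omega> (wp \<omega> k) (wp \<omega> l) = ev2 \<omega> (unitv k) (wp \<omega> l) + pp \<omega> k * ev2 \<omega> (unitv 2) (wp \<omega> l) + qq \<omega> k * ev2 \<omega> (unitv 5) (wp \<omega> l)"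
    by (simp add: wp_def[of \<omega> k] ev2_lc_left)
  also have "\<dots> = ev2 \<omega> (unitv k) (wp \<omega> l)" using u2_wp[OF l] u5_wp[OF l] by simp
  also have "\<dots> = MM \<omega> k l" using k l by (simp add: wp_def ev2_lc_right ev2_units MM_def)
  finally show ?thesis .
qed

lemma MM_diag: "MM \<omega> k k = 0"
  using c by (simp add: MM_def pp_def qq_def diag0[OF f] field_simps)

lemma MM_skew: "MM \<omega> l k = - MM \<omega> k l"
  using c by (simp add: MM_def pp_def qq_def sk'[of k l] sk'[of k 2] sk'[of l 2] sk'[of k 5] sk'[of l 5] field_simps)

lemma MM01: "\<omega> [0,1] * \<omega> [2,5] - \<omega> [0,2] * \<omega> [1,5] + \<omega> [0,5] * \<omega> [1,2] = 0 \<Longrightarrow> MM \<omega> 0 1 = 0"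
  using c by (simp add: MM_def pp_def qq_def cc_def field_simps sk'[of 1 5] sk'[of 2 1])

lemma MM34: "\<omega> [2,3] * \<omega> [4,5] - \<omega> [2,4] * \<omega> [3,5] + \<omega> [2,5] * \<omega> [3,4] = 0 \<Longrightarrow> MM \<omega> 3 4 = 0"
  using c by (simp add: MM_def pp_def qq_def cc_def field_simps sk'[of 2 3] sk'[of 2 4])

definition DD where "DD = MM \<omega> 0 3 * MM \<omega> 1 4 - MM \<omega> 0 4 * MM \<omega> 1 3"

definition bb :: "nat \<Rightarrow> vec" where
  "bb i = (if i = 0 then wp \<omega> 0 else if i = 1 then wp \<omega> 1 else if i = 2 then unitv 2
    else if i = 3 then lc (MM \<omega> 1 4 / cc \<omega>) (wp \<omega> 3) (- MM \<omega> 1 3 / cc \<omega>) (wp \<omega> 4)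
    else if i = 4 then lc (- MM \<omega> 0 4 / cc \<omega>) (wp \<omega> 3) (MM \<omega> 0 3 / cc \<omega>) (wp \<omega> 4)
    else if i = 5 then lc (DD / (cc \<omega>)\<^sup>2) (unitv 5) 0 (unitv 5) else (\<lambda>_. 0))"

lemma bb_ev2:
  assumes m01: "MM \<omega> 0 1 = 0" and m34: "MM \<omega> 3 4 = 0" and i: "i < 6" and j: "j < 6"
  shows "ev2 \<omega> (bb i) (bb j) = (DD / cc \<omega>) * stdform i j"
proof -
  have m10: "MM \<omega> 1 0 = 0" and m43: "MM \<omega> 4 3 = 0" using m01 m34 MM_skew by (metis neg_equal_0_iff_equal)+
  have u: "ev2 \<omega> (unitv 2) (unitv 2) = 0" "ev2 \<omega> (unitv 5) (unitv 5) = 0"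
    "ev2 \<omega> (unitv 2) (unitv 5) = cc \<omega>" "ev2 \<omega> (unitv 5) (unitv 2) = - cc \<omega>"
    by (simp_all add: ev2_units diag0[OF f] cc_def sk'[of 2 5])
  have sk4: "MM \<omega> 3 0 = - MM \<omega> 0 3" "MM \<omega> 4 0 = - MM \<omega> 0 4" "MM \<omega> 3 1 = - MM \<omega> 1 3" "MM \<omega> 4 1 = - MM \<omega> 1 4"
    by (rule MM_skew)+
  have cz: "cc \<omega> \<noteq> 0" using c by (simp add: cc_def)
  have sucs: "MM \<omega> 0 (Suc 0) = 0" "MM \<omega> (Suc 0) 0 = 0" "MM \<omega> 3 (Suc 0) = - MM \<omega> (Suc 0) 3" "MM \<omega> 4 (Suc 0) = - MM \<omega> (Suc 0) 4"
    using m01 m10 sk4 by simp_all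
  note simps = sucs bb_def ev2_lc_left ev2_lc_right wp_wp wp_u2 wp_u5 u2_wp u5_wp u MM_diag m01 m34 m10 m43 sk4 stdform_def DD_def
  from i j show ?thesis
    apply (elim LL_cases[elim_format] disjE)
    by (simp_all add: simps) (simp_all add: field_simps power2_eq_square cz)
qed

lemma y_decomp:
  assumes y: "y \<in> V"
  shows "y = lc (y 0) (wp \<omega> 0) 1 (lc (y 1) (wp \<omega> 1) 1 (lc (y 3) (wp \<omega> 3) 1 (lc (y 4) (wp \<omega> 4) 1
     (lc (y 2 - (y 0 * pp \<omega> 0 + y 1 * pp \<omega> 1 + y 3 * pp \<omega> 3 + y 4 * pp \<omega> 4)) (unitv 2)
         (y 5 - (y 0 * qq \<omega> 0 + y 1 * qq \<omega> 1 + y 3 * qq \<omega> 3 + y 4 * qq \<omega> 4)) (unitv 5)))))"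
proof
  fix m
  show "y m = lc (y 0) (wp \<omega> 0) 1 (lc (y 1) (wp \<omega> 1) 1 (lc (y 3) (wp \<omega> 3) 1 (lc (y 4) (wp \<omega> 4) 1
     (lc (y 2 - (y 0 * pp \<omega> 0 + y 1 * pp \<omega> 1 + y 3 * pp \<omega> 3 + y 4 * pp \<omega> 4)) (unitv 2)
         (y 5 - (y 0 * qq \<omega> 0 + y 1 * qq \<omega> 1 + y 3 * qq \<omega> 3 + y 4 * qq \<omega> 4)) (unitv 5))))) m"
  proof (cases "m < 6")
    case True
    then show ?thesis
      apply (elim LL_cases[elim_format] disjE)
      by (simp_all add: lc_def wp_def unitv_def algebra_simps)
  next
    case False
    then have "y m = 0" using y by (simp add: V_def)
    then show ?thesis using False by (simp add: lc_def wp_def unitv_def)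
  qed
qed

lemma wp_V: "wp \<omega> k \<in> V \<or> k \<ge> 6"
  by (auto simp: V_def wp_def lc_def unitv_def)

lemma DD_nz:
  assumes m01: "MM \<omega> 0 1 = 0"
    and nd: "\<forall>x\<in>V. (\<forall>y\<in>V. ev2 \<omega> x y = 0) \<longrightarrow> x = (\<lambda>_. 0)"
  shows "DD \<noteq> 0"
proof
  assume D0: "DD = 0"
  have m10: "MM \<omega> 1 0 = 0" using m01 MM_skew by (metis neg_equal_0_iff_equal)
  obtain a b where ab: "a \<noteq> 0 \<or> b \<noteq> 0" "a * MM \<omega> 0 3 + b * MM \<omega> 1 3 = 0" "a * MM \<omega> 0 4 + b * MM \<omega> 1 4 = 0"
  proof (cases "MM \<omega> 1 3 \<noteq> 0 \<or> MM \<omega> 0 3 \<noteq> 0")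
    case True
    then show ?thesis using D0
      by (intro that[of "MM \<omega> 1 3" "- MM \<omega> 0 3"]) (auto simp: DD_def algebra_simps)
  next
    case F: False
    show ?thesis
    proof (cases "MM \<omega> 1 4 \<noteq> 0 \<or> MM \<omega> 0 4 \<noteq> 0")
      case True
      then show ?thesis using F
        by (intro that[of "MM \<omega> 1 4" "- MM \<omega> 0 4"]) (auto simp: algebra_simps)
    next
      case False
      then show ?thesis using F by (intro that[of 1 0]) auto
    qed
  qed
  let ?x = "lc a (wp \<omega> 0) b (wp \<omega> 1)"
  have xV: "?x \<in> V" by (simp add: V_def lc_def wp_def unitv_def)
  have xw: "ev2 \<omega> ?x (wp \<omega> j) = a * MM \<omega> 0 j + b * MM \<omega> 1 j" if "j < 6" for j
    using that by (simp add: ev2_lc_left wp_wp)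
  have x2: "ev2 \<omega> ?x (unitv 2) = 0" "ev2 \<omega> ?x (unitv 5) = 0"
    by (simp_all add: ev2_lc_left wp_u2 wp_u5)
  have xw4: "ev2 \<omega> ?x (wp \<omega> 0) = a * MM \<omega> 0 0 + b * MM \<omega> 1 0"
    "ev2 \<omega> ?x (wp \<omega> 1) = a * MM \<omega> 0 1 + b * MM \<omega> 1 1"
    "ev2 \<omega> ?x (wp \<omega> 3) = a * MM \<omega> 0 3 + b * MM \<omega> 1 3"
    "ev2 \<omega> ?x (wp \<omega> 4) = a * MM \<omega> 0 4 + b * MM \<omega> 1 4"
    by (rule xw, simp)+
  have "ev2 \<omega> ?x y = 0" if "y \<in> V" for y
    apply (subst y_decomp[OF that])
    apply (simp only: ev2_lc_right xw4 x2 MM_diag m01 m10 ab(2,3))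
    by simp
  then have "?x = (\<lambda>_. 0)" using nd xV by blast
  then have "?x 0 = 0" "?x 1 = 0" by simp_all
  then have "a = 0" "b = 0" by (simp_all add: lc_def wp_def unitv_def)
  then show False using ab(1) by simp
qed

lemma bb_comp:
  "bb i 0 = (if i = 0 then 1 else 0)"
  "bb i (Suc 0) = (if i = 1 then 1 else 0)"
  "bb i 3 = (if i = 3 then MM \<omega> 1 4 / cc \<omega> else if i = 4 then - MM \<omega> 0 4 / cc \<omega> else 0)"
  "bb i 4 = (if i = 3 then - MM \<omega> 1 3 / cc \<omega> else if i = 4 then MM \<omega> 0 3 / cc \<omega> else 0)"
  by (auto simp: bb_def lc_def wp_def unitv_def)

lemma bb2: "bb 2 = unitv 2" by (simp add: bb_def)
lemma bb5: "bb 5 m = DD / (cc \<omega>)\<^sup>2 * unitv 5 m" by (simp add: bb_def lc_def)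

lemma bb_V: "bb i \<in> V"
  by (auto simp: bb_def V_def lc_def wp_def unitv_def)

lemma comb_lb: "comb bb (lb (unitv i) (unitv j)) m = lb (unitv i) (unitv j) 2 * bb 2 m + lb (unitv i) (unitv j) 5 * bb 5 m"
  by (simp add: comb_def sum6 lb_def)

lemma bb_lb:
  assumes D: "DD \<noteq> 0"
  shows "lb (bb i) (bb j) = comb bb (lb (unitv i) (unitv j))"
proof
  fix m
  have cz: "cc \<omega> \<noteq> 0" using c by (simp add: cc_def)
  have L: "lb (bb i) (bb j) m = (if m = 2 then - (bb i 0 * bb j 1 - bb i 1 * bb j 0)
      else if m = 5 then - (bb i 3 * bb j 4 - bb i 4 * bb j 3) else 0)"
    by (simp add: lb_def)
  have R: "comb bb (lb (unitv i) (unitv j)) m =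
     (if m = 2 then - (unitv i 0 * unitv j 1 - unitv i 1 * unitv j 0) else 0)
     + (if m = 5 then - (unitv i 3 * unitv j 4 - unitv i 4 * unitv j 3) * (DD / (cc \<omega>)\<^sup>2) else 0)"
    unfolding comb_lb bb2 bb5 by (simp add: lb_def unitv_def)
  have b5: "- (bb i 3 * bb j 4 - bb i 4 * bb j 3) = - (unitv i 3 * unitv j 4 - unitv i 4 * unitv j 3) * (DD / (cc \<omega>)\<^sup>2)"
  proof (cases "i = 3 \<or> i = 4")
    case True
    then show ?thesis
    proof
      assume i3: "i = 3"
      show ?thesis
      proof (cases "j = 4")
        case True then show ?thesis using i3 cz by (simp add: bb_comp unitv_def DD_def field_simps power2_eq_square)
      next
        case False then show ?thesis using i3 by (simp add: bb_comp unitv_def)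
      qed
    next
      assume i4: "i = 4"
      show ?thesis
      proof (cases "j = 3")
        case True then show ?thesis using i4 cz by (simp add: bb_comp unitv_def DD_def field_simps power2_eq_square)
      next
        case False then show ?thesis using i4 by (simp add: bb_comp unitv_def)
      qed
    qed
  next
    case False then show ?thesis by (simp add: bb_comp unitv_def)
  qed
  have b2: "bb i 0 * bb j 1 - bb i 1 * bb j 0 = unitv i 0 * unitv j 1 - unitv i 1 * unitv j 0"
    by (simp add: bb_comp unitv_def)
  show "lb (bb i) (bb j) m = comb bb (lb (unitv i) (unitv j)) m"
    unfolding L R using b5 b2 by simp
qed

lemma bb_indep:
  assumes D: "DD \<noteq> 0" and z: "comb bb v = (\<lambda>_. 0)"
  shows "\<forall>k<6. v k = 0"
proof -
  have cz: "cc \<omega> \<noteq> 0" using c by (simp add: cc_def)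
  have e: "comb bb v m = 0" for m using z by simp
  have cm: "comb bb v m = v 0 * bb 0 m + v 1 * bb 1 m + v 2 * bb 2 m + v 3 * bb 3 m + v 4 * bb 4 m + v 5 * bb 5 m" for m
    by (simp add: comb_def sum6)
  have v0: "v 0 = 0" using e[of 0] unfolding cm by (simp add: bb_comp)
  have v1: "v 1 = 0" using e[of 1] unfolding cm by (simp add: bb_comp)
  have e3: "v 3 * MM \<omega> 1 4 - v 4 * MM \<omega> 0 4 = 0" using e[of 3] cz unfolding cm
    by (simp add: bb_comp bb2 bb5 unitv_def field_simps)
  have e4: "- v 3 * MM \<omega> 1 3 + v 4 * MM \<omega> 0 3 = 0" using e[of 4] cz unfolding cm
    by (simp add: bb_comp bb2 bb5 unitv_def field_simps)
  have a: "v 3 * MM \<omega> 1 4 = v 4 * MM \<omega> 0 4" using e3 by simp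
  have b: "v 3 * MM \<omega> 1 3 = v 4 * MM \<omega> 0 3" using e4 by simp
  have "v 3 * DD = MM \<omega> 0 3 * (v 3 * MM \<omega> 1 4) - MM \<omega> 0 4 * (v 3 * MM \<omega> 1 3)"
    by (simp add: DD_def algebra_simps)
  also have "\<dots> = MM \<omega> 0 3 * (v 4 * MM \<omega> 0 4) - MM \<omega> 0 4 * (v 4 * MM \<omega> 0 3)" by (simp only: a b)
  also have "\<dots> = 0" by (simp add: algebra_simps)
  finally have "v 3 * DD = 0" .
  then have v3: "v 3 = 0" using D by simp
  have "v 4 * DD = MM \<omega> 1 4 * (v 4 * MM \<omega> 0 3) - MM \<omega> 1 3 * (v 4 * MM \<omega> 0 4)"
    by (simp add: DD_def algebra_simps)
  also have "\<dots> = MM \<omega> 1 4 * (v 3 * MM \<omega> 1 3) - MM \<omega> 1 3 * (v 3 * MM \<omega> 1 4)" by (simp only: a b)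
  also have "\<dots> = 0" by (simp add: algebra_simps)
  finally have "v 4 * DD = 0" .
  then have v4: "v 4 = 0" using D by simp
  have v2: "v 2 = 0" using e[of 2] v0 v1 v3 v4 unfolding cm by (simp add: bb2 bb5 unitv_def)
  have "v 5 * (DD / (cc \<omega>)\<^sup>2) = 0" using e[of 5] v0 v1 v2 v3 v4 unfolding cm by (simp add: bb2 bb5 unitv_def)
  then have v5: "v 5 = 0" using D cz by simp
  show ?thesis using v0 v1 v2 v3 v4 v5 by (auto dest!: LL_cases)
qed

end

lemma unit_centre: "i = 2 \<or> i = 5 \<Longrightarrow> unitv i \<in> centre"
  by (auto simp: centre_def V_def unitv_def lb_def fun_eq_iff)

theorem lemma4p6:
  fixes \<omega> \<rho> :: form
  assumes "half_flat \<omega> \<rho>"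
  shows "(\<exists>x\<in>centre. \<exists>y\<in>centre. ev2 \<omega> x y \<noteq> 0) \<and>
         (\<exists>b c. standard_basis b \<and> c \<noteq> 0 \<and>
            (\<forall>i<6. \<forall>j<6. ev2 \<omega> (b i) (b j) = c * stdform i j))"
proof -
  have c: "\<omega> [2,5] \<noteq> 0" by (rule part1[OF assms])
  have fw: "is_form 2 \<omega>" and nd: "\<forall>x\<in>V. (\<forall>y\<in>V. ev2 \<omega> x y = 0) \<longrightarrow> x = (\<lambda>_. 0)"
    and d4: "dform 4 (wedge 2 2 \<omega> \<omega>) = (\<lambda>_. 0)"
    using assms by (auto simp: half_flat_def SU3_structure_def compatible_normalised_def nondeg2_def)
  note C = C12[OF fw d4]
  have m01: "MM \<omega> 0 1 = 0" by (rule MM01[OF fw c C(2)])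
  have m34: "MM \<omega> 3 4 = 0" by (rule MM34[OF fw c C(1)])
  have D: "DD \<omega> \<noteq> 0" by (rule DD_nz[OF fw c m01 nd])
  have cz: "cc \<omega> \<noteq> 0" using c by (simp add: cc_def)
  have u2: "unitv 2 \<in> centre" "unitv 5 \<in> centre" by (rule unit_centre, simp)+
  have e: "ev2 \<omega> (unitv 2) (unitv 5) \<noteq> 0" using ev2_units[of 2 5 \<omega>] c by simp
  have part_a: "\<exists>x\<in>centre. \<exists>y\<in>centre. ev2 \<omega> x y \<noteq> 0"
    using u2 e by blast
  have sb: "standard_basis (bb \<omega>)"
    unfolding standard_basis_def
    using bb_V[OF fw c] bb_indep[OF fw c D] bb_lb[OF fw c D] by blast
  have "\<forall>i<6. \<forall>j<6. ev2 \<omega> (bb \<omega> i) (bb \<omega> j) = (DD \<omega> / cc \<omega>) * stdform i j"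
    using bb_ev2[OF fw c m01 m34] by blast
  moreover have "DD \<omega> / cc \<omega> \<noteq> 0" using D cz by simp
  ultimately show ?thesis using part_a sb by blast
qed

end
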